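(* For every measurement assemblage $\vec B$ on $\mathcal H$, $$\mathbb{IR}^{\rm R}(\vec B)=\max_{\rho_B}\mathbb{SR}^{\rm R}\big(\rho_B^{1/2}\vec B\rho_B^{1/2}\big),$$ where the maximum is over density operators $\rho_B$ on $\mathcal H$. Moreover, every full-rank density operator $\rho_B$ attains the maximum.
   Context: All Hilbert spaces are finite-dimensional. A measurement assemblage (MA) on $\mathcal H$ is a family $\vec M=\{M_{a|x}\}_{a,x}$, with $x$ ranging over a finite input set and $a$ over a finite outcome set $\mathcal A$ of cardinality $|\mathcal A|$, such that for each $x$, $\{M_{a|x}\}_a$ is a POVM. $\vec M$ is jointly measurable, written $\vec M\in\mathbb{JM}$, if there exist a finite POVM $\{G_\lambda\}_\lambda$ and conditional probability distributions $p(a|x,\lambda)$ with $M_{a|x}=\sum_\lambda p(a|x,\lambda)G_\lambda$ for all $a,x$. A state assemblage (SA) on $\mathcal H$ is a family $\vec\sigma=\{\sigma_{a|x}\}_{a,x}$ of positive semidefinite operators such that $\sum_a\sigma_{a|x}=\rho$ is independent of $x$ and $\mathrm{tr}\rho=1$; $\rho$ is called its reduced state. $\vec\sigma$ admits a local hidden state model, written $\vec\sigma\in\mathbb{LHS}$, if $\sigma_{a|x}=\sum_\lambda p(\lambda)p(a|x,\lambda)\rho_\lambda$ for some finite probability distribution $p(\lambda)$, conditional distributions $p(a|x,\lambda)$ and density operators $\rho_\lambda$. Random incompatibility robustness: $\mathbb{IR}^{\rm R}(\vec M)=\min\{t\ge0:\exists\ \vec D\in\mathbb{JM}$ with $(M_{a|x}+t\mathbb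 1/|\mathcal A|)/(1+t)=D_{a|x}\ \forall a,x\}$. Random steering robustness of an SA $\vec\sigma$ with reduced state $\rho$: $\mathbb{SR}^{\rm R}(\vec\sigma)=\min\{t\ge0:\exists\ \vec\tau\in\mathbb{LHS}$ with $(\sigma_{a|x}+t\rho/|\mathcal A|)/(1+t)=\tau_{a|x}\ \forall a,x\}$. For a density operator $\rho$ and an MA $\vec B$, $\rho^{1/2}\vec B\rho^{1/2}$ denotes the SA $\{\rho^{1/2}B_{a|x}\rho^{1/2}\}_{a,x}$, with reduced state $\rho$. *)

theory Defs
  imports "HOL-Analysis.Analysis"
begin

text \<open>Hilbert space H = complex^'n ('n a finite type, dim = CARD('n)).  Outcomes range over a finite
  type 'a, inputs over a finite type 'x.\<close>

type_synonym 'n op = "complex^'n^'n"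

definition psd :: "'n::finite op \<Rightarrow> bool" where
  "psd A \<longleftrightarrow> (\<forall>v::complex^'n.
      Im (\<Sum>i\<in>UNIV. cnj (v$i) * (A *v v)$i) = 0 \<and>
      Re (\<Sum>i\<in>UNIV. cnj (v$i) * (A *v v)$i) \<ge> 0)"

definition density_op :: "'n::finite op \<Rightarrow> bool" where
  "density_op \<rho> \<longleftrightarrow> psd \<rho> \<and> trace \<rho> = 1"

definition op_sqrt :: "'n::finite op \<Rightarrow> 'n op" where
  "op_sqrt A = (THE X. psd X \<and> X ** X = A)"

definition povm :: "('l \<Rightarrow> 'n::finite op) \<Rightarrow> 'l set \<Rightarrow> bool" where
  "povm G L \<longleftrightarrow> (\<forall>l\<in>L. psd (G l)) \<and> (\<Sum>l\<in>L. G l) = mat 1"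

text \<open>Measurement assemblage: M a x = M_{a|x}.\<close>
definition MA :: "('a::finite \<Rightarrow> 'x::finite \<Rightarrow> 'n::finite op) \<Rightarrow> bool" where
  "MA M \<longleftrightarrow> (\<forall>x. povm (\<lambda>a. M a x) UNIV)"

definition JM :: "('a::finite \<Rightarrow> 'x::finite \<Rightarrow> 'n::finite op) \<Rightarrow> bool" where
  "JM M \<longleftrightarrow> (\<exists>(L::nat set) (G::nat \<Rightarrow> 'n op) (p::'a \<Rightarrow> 'x \<Rightarrow> nat \<Rightarrow> real).
      finite L \<and> povm G L \<and>
      (\<forall>a x l. l \<in> L \<longrightarrow> p a x l \<ge> 0) \<and>
      (\<forall>x l. l \<in> L \<longrightarrow> (\<Sum>a\<in>UNIV. p a x l) = 1) \<and>
      (\<forall>a x. M a x = (\<Sum>l\<in>L. p a x l *\<^sub>R G l)))"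

definition SA :: "('a::finite \<Rightarrow> 'x::finite \<Rightarrow> 'n::finite op) \<Rightarrow> bool" where
  "SA \<sigma> \<longleftrightarrow> (\<forall>a x. psd (\<sigma> a x)) \<and>
     (\<exists>\<rho>. trace \<rho> = 1 \<and> (\<forall>x. (\<Sum>a\<in>UNIV. \<sigma> a x) = \<rho>))"

definition reduced_state :: "('a::finite \<Rightarrow> 'x::finite \<Rightarrow> 'n::finite op) \<Rightarrow> 'n op" where
  "reduced_state \<sigma> = (THE \<rho>. \<forall>x. (\<Sum>a\<in>UNIV. \<sigma> a x) = \<rho>)"

definition LHS :: "('a::finite \<Rightarrow> 'x::finite \<Rightarrow> 'n::finite op) \<Rightarrow> bool" where
  "LHS \<sigma> \<longleftrightarrow> (\<exists>(L::nat set) (q::nat \<Rightarrow> real) (p::'a \<Rightarrow> 'x \<Rightarrow> nat \<Rightarrow> real) (r::nat \<Rightarrow> 'n op).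
      finite L \<and> (\<forall>l\<in>L. q l \<ge> 0) \<and> (\<Sum>l\<in>L. q l) = 1 \<and>
      (\<forall>a x l. l \<in> L \<longrightarrow> p a x l \<ge> 0) \<and>
      (\<forall>x l. l \<in> L \<longrightarrow> (\<Sum>a\<in>UNIV. p a x l) = 1) \<and>
      (\<forall>l\<in>L. density_op (r l)) \<and>
      (\<forall>a x. \<sigma> a x = (\<Sum>l\<in>L. (q l * p a x l) *\<^sub>R r l)))"

text \<open>Random incompatibility robustness (the minimum is rendered as Inf).\<close>
definition IR_R :: "('a::finite \<Rightarrow> 'x::finite \<Rightarrow> 'n::finite op) \<Rightarrow> real" where
  "IR_R M = Inf {t. t \<ge> 0 \<and> (\<exists>D. JM D \<and>
      (\<forall>a x. (1 / (1 + t)) *\<^sub>R (M a x + (t / real CARD('a)) *\<^sub>R mat 1) = D a x))}"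

definition SR_R :: "('a::finite \<Rightarrow> 'x::finite \<Rightarrow> 'n::finite op) \<Rightarrow> real" where
  "SR_R \<sigma> = Inf {t. t \<ge> 0 \<and> (\<exists>\<tau>. LHS \<tau> \<and>
      (\<forall>a x. (1 / (1 + t)) *\<^sub>R (\<sigma> a x + (t / real CARD('a)) *\<^sub>R reduced_state \<sigma>) = \<tau> a x))}"

definition sandwich :: "'n::finite op \<Rightarrow> ('a \<Rightarrow> 'x \<Rightarrow> 'n op) \<Rightarrow> ('a \<Rightarrow> 'x \<Rightarrow> 'n op)" where
  "sandwich \<rho> B = (\<lambda>a x. op_sqrt \<rho> ** B a x ** op_sqrt \<rho>)"

end

theory Submission
  imports Defs
begin


definition cinner :: "complex^'n::finite \<Rightarrow> complex^'n \<Rightarrow> complex" where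
  "cinner v w = (\<Sum>i\<in>UNIV. cnj (v$i) * w$i)"

definition adj :: "'n::finite op \<Rightarrow> 'n op" where
  "adj A = (\<chi> i j. cnj (A$j$i))"

lemma psd_cinner: "psd A \<longleftrightarrow> (\<forall>v. Im (cinner v (A *v v)) = 0 \<and> Re (cinner v (A *v v)) \<ge> 0)"
  unfolding psd_def cinner_def by simp

lemma cinner_add_right: "cinner v (w + z) = cinner v w + cinner v z"
  unfolding cinner_def by (simp add: distrib_left sum.distrib)
lemma cinner_add_left: "cinner (v + w) z = cinner v z + cinner w z"
  unfolding cinner_def by (simp add: distrib_right sum.distrib)
lemma cinner_diff_right: "cinner v (w - z) = cinner v w - cinner v z"
  unfolding cinner_def by (simp add: right_diff_distrib sum_subtractf)
lemma cinner_diff_left: "cinner (v - w) z = cinner v z - cinner w z"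
  unfolding cinner_def by (simp add: left_diff_distrib sum_subtractf)
lemma cinner_scale_right: "cinner v (c *s w) = c * cinner v w"
  unfolding cinner_def by (simp add: sum_distrib_left mult_ac)
lemma cinner_scale_left: "cinner (c *s v) w = cnj c * cinner v w"
  unfolding cinner_def by (simp add: sum_distrib_left mult_ac)
lemma cinner_zero_right[simp]: "cinner v 0 = 0"
  unfolding cinner_def by simp
lemma cinner_zero_left[simp]: "cinner 0 v = 0"
  unfolding cinner_def by simp
lemma cinner_sum_right: "cinner v (\<Sum>u\<in>S. f u) = (\<Sum>u\<in>S. cinner v (f u))"
  unfolding cinner_def by (simp add: sum_distrib_left sum.swap[of _ S])
lemma cinner_sum_left: "cinner (\<Sum>u\<in>S. f u) v = (\<Sum>u\<in>S. cinner (f u) v)"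
  unfolding cinner_def by (simp add: sum_distrib_right sum.swap[of _ S] cnj_sum)
lemma cinner_commute: "cinner w v = cnj (cinner v w)"
  unfolding cinner_def cnj_sum by (rule sum.cong) (simp_all add: mult.commute)
lemma cinner_adj: "cinner v (A *v w) = cinner (adj A *v v) w"
proof -
  have "cinner v (A *v w) = (\<Sum>i\<in>UNIV. \<Sum>j\<in>UNIV. cnj (v$i) * (A$i$j * w$j))"
    unfolding cinner_def matrix_vector_mult_def by (simp add: sum_distrib_left)
  also have "\<dots> = (\<Sum>j\<in>UNIV. \<Sum>i\<in>UNIV. cnj (v$i) * (A$i$j * w$j))"
    by (rule sum.swap)
  also have "\<dots> = cinner (adj A *v v) w"
    unfolding cinner_def matrix_vector_mult_def adj_def
    by (simp add: sum_distrib_right sum_distrib_left cnj_sum mult_ac)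
  finally show ?thesis .
qed
lemma Re_cinner: "Re (cinner v w) = inner v w"
  unfolding cinner_def inner_vec_def inner_complex_def by (simp add: Re_sum)
lemma cnj_mult_self': "cnj z * z = complex_of_real ((cmod z)^2)"
  using complex_norm_square[of z] by (simp add: mult.commute)
lemma cinner_self: "cinner v v = complex_of_real (norm v ^ 2)"
proof -
  have "cinner v v = (\<Sum>i\<in>UNIV. complex_of_real ((cmod (v$i))^2))"
    unfolding cinner_def by (simp add: cnj_mult_self')
  also have "\<dots> = complex_of_real (\<Sum>i\<in>UNIV. (cmod (v$i))^2)" by simp
  also have "(\<Sum>i\<in>UNIV. (cmod (v$i))^2) = norm v ^ 2"
    unfolding norm_vec_def L2_set_def by (simp add: sum_nonneg)
  finally show ?thesis .
qed
lemma cinner_self_eq_0: "cinner v v = 0 \<longleftrightarrow> v = 0"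
  by (simp add: cinner_self)
lemma adj_adj[simp]: "adj (adj A) = A" unfolding adj_def by (simp add: vec_eq_iff)
lemma adj_mult: "adj (A ** B) = adj B ** adj A"
  unfolding adj_def matrix_matrix_mult_def by (simp add: vec_eq_iff cnj_sum mult.commute)
lemma adj_mat1[simp]: "adj (mat 1) = mat 1" unfolding adj_def mat_def by (simp add: vec_eq_iff)

lemma mv_sum: "A *v (\<Sum>u\<in>S. f u) = (\<Sum>u\<in>S. A *v f u)"
  unfolding matrix_vector_mult_def by (simp add: vec_eq_iff sum_distrib_left sum.swap[of _ S] sum_component)
lemma mv_scale: "A *v (c *s x) = c *s (A *v (x::complex^'n::finite))"
  by (rule vector_scalar_commute)




lemma herm_cinner: "adj A = A \<Longrightarrow> cinner u (A *v v) = cinner (A *v u) v"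
  by (metis cinner_adj)

lemma herm_real: "adj A = A \<Longrightarrow> Im (cinner v (A *v v)) = 0"
proof -
  assume h: "adj A = A"
  have "cinner v (A *v v) = cnj (cinner v (A *v v))"
    using herm_cinner[OF h, of v v] cinner_commute[of "A *v v" v] by simp
  then show ?thesis by (metis cnj.simps(2) complex_cnj_cancel_iff equal_neg_zero Im_complex_div_lemma)
qed

lemma quad_zero_imp_zero:
  fixes B :: "'n::finite op"
  assumes "\<And>v. cinner v (B *v v) = 0"
  shows "B = 0"
proof -
  have s: "cinner x (B *v y) = 0" for x y
  proof -
    have e1: "cinner x (B *v y) + cinner y (B *v x) = 0"
      using assms[of "x + y"] assms[of x] assms[of y]
      by (simp add: matrix_vector_right_distrib cinner_add_left cinner_add_right add.commute)
    have e2: "\<i> * cinner x (B *v y) - \<i> * cinner y (B *v x) = 0"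
      using assms[of "x + \<i> *s y"] assms[of x] assms[of y]
      by (simp add: matrix_vector_right_distrib cinner_add_left cinner_add_right
          mv_scale cinner_scale_left cinner_scale_right algebra_simps)
    have "cinner x (B *v y) = cinner y (B *v x)"
      using e2 by (metis right_diff_distrib' mult_eq_0_iff complex_i_not_zero eq_iff_diff_eq_0)
    with e1 show ?thesis by simp
  qed
  have "B *v y = 0" for y using s[of "B *v y" y] cinner_self_eq_0 by blast
  then show ?thesis by (simp add: matrix_eq)
qed

lemma psd_herm: assumes "psd A" shows "adj A = A"
proof -
  have "cinner v ((A - adj A) *v v) = 0" for v
  proof -
    have r: "Im (cinner v (A *v v)) = 0" using assms psd_cinner by blast
    have "cinner v (adj A *v v) = cinner (A *v v) v"
      using cinner_adj[of v "adj A" v] by simp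
    also have "\<dots> = cnj (cinner v (A *v v))" by (rule cinner_commute)
    also have "\<dots> = cinner v (A *v v)" using r by (simp add: complex_eq_iff)
    finally show ?thesis by (simp add: matrix_vector_mult_diff_rdistrib cinner_diff_right)
  qed
  then have "A - adj A = 0" by (rule quad_zero_imp_zero)
  then show ?thesis by simp
qed




lemma real_quad:
  fixes c d :: real
  assumes "\<And>e. 2*e*c + e^2*d \<le> 0"
  shows "c = 0"
proof (rule ccontr)
  assume c: "c \<noteq> 0"
  define k where "k = \<bar>d\<bar> + 1"
  have k: "k > 0" unfolding k_def by simp
  have a: "2*(c/k)*c + (c/k)^2*d \<le> 0" by (rule assms)
  have eq: "k^2 * (2*(c/k)*c + (c/k)^2*d) = 2*c^2*k + c^2*d"
    using k by (simp add: field_simps power2_eq_square)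
  have "k^2 * (2*(c/k)*c + (c/k)^2*d) \<le> 0"
    using a k by (intro mult_nonneg_nonpos) auto
  then have 1: "2*c^2*k + c^2*d \<le> 0" using eq by simp
  have 2: "c^2*d \<ge> - (c^2*\<bar>d\<bar>)"
  proof -
    have "-\<bar>d\<bar> \<le> d" by linarith
    from mult_left_mono[OF this, of "c^2"] show ?thesis by simp
  qed
  have 3: "c^2 > 0" using c by simp
  have 4: "2*c^2*k = 2*c^2*\<bar>d\<bar> + 2*c^2" unfolding k_def by (simp add: algebra_simps)
  have 5: "c^2*\<bar>d\<bar> \<ge> 0" by simp
  from 1 2 3 4 5 show False by linarith
qed

lemma cinner_self_Re: "Re (cinner u u) = (norm u)^2"
  by (simp add: cinner_self)

lemma cinner_self_real: "cinner u u = complex_of_real (Re (cinner u u))"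
  by (simp add: cinner_self)

lemma cinner_scale_both: "cinner (c *s u) (A *v (c *s u)) = complex_of_real ((cmod c)^2) * cinner u (A *v u)"
  by (simp add: mv_scale cinner_scale_left cinner_scale_right mult.assoc[symmetric])
     (metis complex_norm_square of_real_power)

lemma cinner_scale_both': "cinner (c *s u) (c *s u) = complex_of_real ((cmod c)^2) * cinner u u"
  by (simp add: cinner_scale_left cinner_scale_right mult.assoc[symmetric])
     (metis complex_norm_square of_real_power)

lemma continuous_quad: "continuous_on S (\<lambda>v. Re (cinner v (A *v v)))"
  unfolding cinner_def matrix_vector_mult_def
  by (simp; intro continuous_intros)




lemma norm1_iff: "cinner v v = 1 \<longleftrightarrow> norm v = 1"
proof -
  have "cinner v v = 1 \<longleftrightarrow> (norm v)^2 = 1" unfolding cinner_self of_real_eq_1_iff ..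
  also have "\<dots> \<longleftrightarrow> norm v = 1" by (smt (verit) norm_ge_zero power2_eq_1_iff)
  finally show ?thesis .
qed

lemma normalize_unit:
  assumes "u \<noteq> 0"
  shows "cinner (complex_of_real (1/norm u) *s u) (complex_of_real (1/norm u) *s u) = 1"
proof -
  have "cinner (complex_of_real (1/norm u) *s u) (complex_of_real (1/norm u) *s u)
      = complex_of_real ((1/norm u)^2 * (norm u)^2)"
    unfolding cinner_scale_both' by (simp only: cinner_self of_real_mult[symmetric] norm_of_real power2_abs)
  also have "\<dots> = 1" using assms by (simp add: field_simps)
  finally show ?thesis .
qed

lemma eigen_exists:
  fixes A :: "'n::finite op" and W :: "(complex^'n) set"
  assumes h: "adj A = A"
    and WA: "\<And>v. v \<in> W \<Longrightarrow> A *v v \<in> W"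
    and Wadd: "\<And>v w. v \<in> W \<Longrightarrow> w \<in> W \<Longrightarrow> v + w \<in> W"
    and Wsc: "\<And>c v. v \<in> W \<Longrightarrow> c *s v \<in> W"
    and Wcl: "closed W"
    and w0: "w0 \<in> W" "w0 \<noteq> 0"
  shows "\<exists>v\<in>W. cinner v v = 1 \<and> A *v v = cinner v (A *v v) *s v"
proof -
  define K where "K = W \<inter> sphere 0 1"
  have Kc: "compact K" unfolding K_def using Wcl by (intro closed_Int_compact) auto
  have Kne: "K \<noteq> {}"
  proof -
    have "complex_of_real (1/norm w0) *s w0 \<in> K"
      unfolding K_def using Wsc[OF w0(1)] normalize_unit[OF w0(2)] norm1_iff by auto
    then show ?thesis by blast
  qed
  define f where "f v = Re (cinner v (A *v v))" for v
  have cont: "continuous_on K f" unfolding f_def by (rule continuous_quad)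
  obtain v where v: "v \<in> K" "\<And>y. y \<in> K \<Longrightarrow> f y \<le> f v"
    using continuous_attains_sup[OF Kc Kne cont] by blast
  define lam where "lam = f v"
  have vW: "v \<in> W" and v1: "cinner v v = 1" using v(1) norm1_iff unfolding K_def by auto
  have bound: "f u \<le> lam * Re (cinner u u)" if uW: "u \<in> W" for u
  proof (cases "u = 0")
    case True then show ?thesis by (simp add: f_def)
  next
    case False
    define c where "c = 1 / norm u"
    have "complex_of_real c *s u \<in> K"
      unfolding K_def c_def using Wsc[OF uW] normalize_unit[OF False] norm1_iff by auto
    then have "f (complex_of_real c *s u) \<le> lam" using v(2) lam_def by blast
    moreover have "f (complex_of_real c *s u) = c^2 * f u"
      unfolding f_def by (simp add: cinner_scale_both)
    ultimately have "c^2 * f u \<le> lam" by simp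
    then have "(norm u)^2 * (c^2 * f u) \<le> (norm u)^2 * lam" by (rule mult_left_mono) simp
    moreover have "(norm u)^2 * c^2 = 1" unfolding c_def using False by (simp add: field_simps)
    moreover have "(norm u)^2 * (c^2 * f u) = ((norm u)^2 * c^2) * f u" by (rule mult.assoc[symmetric])
    ultimately have "f u \<le> (norm u)^2 * lam" by simp
    then show ?thesis unfolding cinner_self_Re by (simp only: mult.commute)
  qed
  have orth: "Re (cinner w (A *v v)) = 0" if wW: "w \<in> W" and wv: "cinner v w = 0" for w
  proof -
    define c where "c = Re (cinner w (A *v v))"
    define d where "d = f w - lam * Re (cinner w w)"
    have wv': "cinner w v = 0" using wv cinner_commute[of w v] by simp
    have cross: "cinner v (A *v w) = cnj (cinner w (A *v v))"
      using herm_cinner[OF h, of v w] cinner_commute[of "A *v v" w] by simp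
    have "2*e*c + e^2*d \<le> 0" for e
    proof -
      define u where "u = v + complex_of_real e *s w"
      have uW: "u \<in> W" unfolding u_def using Wadd[OF vW Wsc[OF wW]] .
      have fu: "f u = lam + 2*e*c + e^2 * f w"
      proof -
        have "cinner u (A *v u) = cinner v (A *v v) + complex_of_real e * cinner v (A *v w)
             + complex_of_real e * cinner w (A *v v) + complex_of_real e * complex_of_real e * cinner w (A *v w)"
          unfolding u_def
          by (simp only: matrix_vector_right_distrib mv_scale cinner_add_left cinner_add_right
              cinner_scale_left cinner_scale_right complex_cnj_complex_of_real) (simp add: algebra_simps)
        then show ?thesis unfolding f_def lam_def c_def cross
          by (simp add: power2_eq_square)
      qed
      have uu: "Re (cinner u u) = 1 + e^2 * Re (cinner w w)"
      proof -
        have "cinner u u = cinner v v + complex_of_real e * cinner v w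
             + complex_of_real e * cinner w v + complex_of_real e * complex_of_real e * cinner w w"
          unfolding u_def
          by (simp only: cinner_add_left cinner_add_right
              cinner_scale_left cinner_scale_right complex_cnj_complex_of_real) (simp add: algebra_simps)
        then show ?thesis using v1 wv wv' by (simp add: power2_eq_square)
      qed
      have "lam + 2*e*c + e^2 * f w \<le> lam * (1 + e^2 * Re (cinner w w))"
        using bound[OF uW] fu uu by simp
      then show ?thesis unfolding d_def by (simp add: algebra_simps)
    qed
    then show ?thesis using real_quad c_def by blast
  qed
  have orth2: "cinner w (A *v v) = 0" if wW: "w \<in> W" and wv: "cinner v w = 0" for w
  proof -
    have "Re (cinner w (A *v v)) = 0" by (rule orth[OF wW wv])
    moreover have "Re (cinner (\<i> *s w) (A *v v)) = 0"
      using orth[OF Wsc[OF wW]] wv by (simp add: cinner_scale_right)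
    then have "Im (cinner w (A *v v)) = 0" by (simp add: cinner_scale_left)
    ultimately show ?thesis by (simp add: complex_eq_iff)
  qed
  define z where "z = A *v v + (- cinner v (A *v v)) *s v"
  have zW: "z \<in> W" unfolding z_def by (intro Wadd WA Wsc vW)
  have vz: "cinner v z = 0" unfolding z_def using v1
    by (simp only: cinner_add_right cinner_scale_right) simp
  have zz: "cinner z z = 0"
  proof -
    have "cinner z z = cinner z (A *v v) + (- cinner v (A *v v)) * cinner z v"
      by (subst (2) z_def) (simp only: cinner_add_right cinner_scale_right)
    also have "cinner z v = 0" using vz cinner_commute[of z v] by simp
    finally show ?thesis using orth2[OF zW vz] by simp
  qed
  then have "z = 0" by (simp add: cinner_self_eq_0)
  then have "A *v v + (- cinner v (A *v v)) *s v = 0" unfolding z_def .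
  then have "A *v v = cinner v (A *v v) *s v"
    unfolding vec_eq_iff by (simp add: add_eq_0_iff2)
  then show ?thesis using vW v1 by blast
qed




lemma continuous_cinner_right: "continuous_on S (\<lambda>v. cinner u v)"
  unfolding cinner_def by (intro continuous_intros)

lemma spectral:
  fixes A :: "'n::finite op"
  assumes h: "adj A = A"
  shows "\<exists>E. finite E \<and> (\<forall>u\<in>E. cinner u u = 1) \<and> (\<forall>u\<in>E. \<forall>w\<in>E. u \<noteq> w \<longrightarrow> cinner u w = 0)
    \<and> (\<forall>u\<in>E. A *v u = cinner u (A *v u) *s u) \<and> (\<forall>v. v = (\<Sum>u\<in>E. cinner u v *s u))"
proof -
  define P where "P E \<longleftrightarrow> (\<forall>u\<in>E. cinner u u = 1) \<and> (\<forall>u\<in>E. \<forall>w\<in>E. u \<noteq> w \<longrightarrow> cinner u w = 0)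
    \<and> (\<forall>u\<in>E. A *v u = cinner u (A *v u) *s u)" for E
  have indep: "independent E" if "P E" for E
  proof (rule pairwise_orthogonal_independent)
    show "pairwise orthogonal E"
      using that unfolding P_def pairwise_def orthogonal_def by (metis Re_cinner zero_complex.sel(1))
    show "0 \<notin> E" using that unfolding P_def by auto
  qed
  have bnd: "finite E \<and> card E \<le> DIM(complex^'n)" if "P E" for E
    using independent_bound[OF indep[OF that]] .
  define Cs where "Cs = card ` {E. P E}"
  have Csf: "finite Cs"
  proof (rule finite_subset)
    show "Cs \<subseteq> {..DIM(complex^'n)}" unfolding Cs_def using bnd by auto
  qed simp
  have "P {}" unfolding P_def by simp
  then have Csne: "Cs \<noteq> {}" unfolding Cs_def by blast
  define m where "m = Max Cs"
  have "m \<in> Cs" unfolding m_def using Csf Csne by (rule Max_in)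
  then obtain E where PE: "P E" and cE: "card E = m" unfolding Cs_def by blast
  have fE: "finite E" using bnd[OF PE] by blast
  have E1: "\<And>u. u \<in> E \<Longrightarrow> cinner u u = 1"
    and E2: "\<And>u w. u \<in> E \<Longrightarrow> w \<in> E \<Longrightarrow> u \<noteq> w \<Longrightarrow> cinner u w = 0"
    and E3: "\<And>u. u \<in> E \<Longrightarrow> A *v u = cinner u (A *v u) *s u"
    using PE unfolding P_def by auto
  define W where "W = {v. \<forall>u\<in>E. cinner u v = 0}"
  have noext: "w = 0" if wW: "w \<in> W" for w
  proof (rule ccontr)
    assume w0: "w \<noteq> 0"
    have WA: "A *v v \<in> W" if "v \<in> W" for v
    proof -
      have "cinner u (A *v v) = 0" if uE: "u \<in> E" for u
      proof -
        have "cinner u (A *v v) = cinner (A *v u) v" by (rule herm_cinner[OF h])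
        also have "\<dots> = cnj (cinner u (A *v u)) * cinner u v"
          by (subst (1) E3[OF uE], rule cinner_scale_left)
        also have "cinner u v = 0" using \<open>v \<in> W\<close> uE unfolding W_def by blast
        finally show ?thesis by simp
      qed
      then show ?thesis unfolding W_def by blast
    qed
    have Wadd: "v + w \<in> W" if "v \<in> W" "w \<in> W" for v w
      using that unfolding W_def by (simp add: cinner_add_right)
    have Wsc: "c *s v \<in> W" if "v \<in> W" for c v
      using that unfolding W_def by (simp add: cinner_scale_right)
    have Wcl: "closed W"
    proof -
      have "W = (\<Inter>u\<in>E. {v. cinner u v = 0})" unfolding W_def by blast
      moreover have "closed {v. cinner u v = 0}" for u
        by (rule closed_Collect_eq) (intro continuous_cinner_right continuous_intros)+
      ultimately show ?thesis by auto
    qed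
    obtain v where vW: "v \<in> W" and v1: "cinner v v = 1" and vA: "A *v v = cinner v (A *v v) *s v"
      using eigen_exists[OF h WA Wadd Wsc Wcl wW w0] by blast
    have vE: "v \<notin> E" using vW v1 unfolding W_def by auto
    have "P (insert v E)"
      unfolding P_def
    proof (intro conjI ballI impI)
      fix u assume "u \<in> insert v E"
      then show "cinner u u = 1" using v1 E1 by auto
      show "A *v u = cinner u (A *v u) *s u" using \<open>u \<in> insert v E\<close> vA E3 by auto
    next
      fix u w assume u: "u \<in> insert v E" and w: "w \<in> insert v E" and uw: "u \<noteq> w"
      show "cinner u w = 0"
      proof (cases "u = v")
        case True
        then have "w \<in> E" using w uw by auto
        then have "cinner w v = 0" using vW unfolding W_def by blast
        then show ?thesis using True cinner_commute[of v w] by simp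
      next
        case False
        then have uE: "u \<in> E" using u by auto
        show ?thesis
        proof (cases "w = v")
          case True
          then show ?thesis using uE vW unfolding W_def by blast
        next
          case False
          then show ?thesis using uE w uw E2 by auto
        qed
      qed
    qed
    then have "card (insert v E) \<in> Cs" unfolding Cs_def by blast
    then have "card (insert v E) \<le> m" unfolding m_def using Csf by simp
    moreover have "card (insert v E) = m + 1" using fE vE cE by simp
    ultimately show False by simp
  qed
  have compl: "v = (\<Sum>u\<in>E. cinner u v *s u)" for v
  proof -
    define z where "z = v - (\<Sum>u\<in>E. cinner u v *s u)"
    have "cinner u' z = 0" if u'E: "u' \<in> E" for u'
    proof -
      have "cinner u' (\<Sum>u\<in>E. cinner u v *s u) = (\<Sum>u\<in>E. cinner u v * cinner u' u)"
        by (simp only: cinner_sum_right cinner_scale_right)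
      also have "\<dots> = cinner u' v * cinner u' u' + (\<Sum>u\<in>E - {u'}. cinner u v * cinner u' u)"
        using fE u'E by (rule sum.remove)
      also have "(\<Sum>u\<in>E - {u'}. cinner u v * cinner u' u) = 0"
        using E2 u'E by (intro sum.neutral) auto
      finally have "cinner u' (\<Sum>u\<in>E. cinner u v *s u) = cinner u' v"
        using E1[OF u'E] by simp
      then show ?thesis unfolding z_def by (simp only: cinner_diff_right) simp
    qed
    then have "z \<in> W" unfolding W_def by blast
    then have "z = 0" by (rule noext)
    then show ?thesis unfolding z_def by simp
  qed
  show ?thesis
  proof (intro exI[of _ E] conjI)
    show "finite E" by (fact fE)
    show "\<forall>u\<in>E. cinner u u = 1" using E1 by blast
    show "\<forall>u\<in>E. \<forall>w\<in>E. u \<noteq> w \<longrightarrow> cinner u w = 0" using E2 by blast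
    show "\<forall>u\<in>E. A *v u = cinner u (A *v u) *s u" using E3 by blast
    show "\<forall>v. v = (\<Sum>u\<in>E. cinner u v *s u)" using compl by blast
  qed
qed




lemma orth_sum:
  assumes fE: "finite E" and E1: "\<forall>u\<in>E. cinner u u = 1"
    and E2: "\<forall>u\<in>E. \<forall>w\<in>E. u \<noteq> w \<longrightarrow> cinner u w = 0" and wE: "w \<in> E"
  shows "cinner w (\<Sum>u\<in>E. c u *s u) = c w"
proof -
  have "cinner w (\<Sum>u\<in>E. c u *s u) = (\<Sum>u\<in>E. c u * cinner w u)"
    by (simp only: cinner_sum_right cinner_scale_right)
  also have "\<dots> = c w * cinner w w + (\<Sum>u\<in>E - {w}. c u * cinner w u)"
    using fE wE by (rule sum.remove)
  also have "(\<Sum>u\<in>E - {w}. c u * cinner w u) = 0"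
    using E2 wE by (intro sum.neutral) auto
  finally show ?thesis using E1 wE by simp
qed

lemma psd_quad_real: "psd A \<Longrightarrow> cinner v (A *v v) = complex_of_real (Re (cinner v (A *v v)))"
  unfolding psd_cinner by (simp add: complex_eq_iff)

lemma herm_quad_real: "adj A = A \<Longrightarrow> cinner v (A *v v) = complex_of_real (Re (cinner v (A *v v)))"
  using herm_real by (simp add: complex_eq_iff)

lemma sqrt_exists:
  fixes A :: "'n::finite op"
  assumes pA: "psd A"
  shows "\<exists>X. psd X \<and> X ** X = A"
proof -
  have h: "adj A = A" by (rule psd_herm[OF pA])
  obtain E where fE: "finite E" and E1: "\<forall>u\<in>E. cinner u u = 1"
    and E2: "\<forall>u\<in>E. \<forall>w\<in>E. u \<noteq> w \<longrightarrow> cinner u w = 0"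
    and E3: "\<forall>u\<in>E. A *v u = cinner u (A *v u) *s u"
    and E4: "\<forall>v. v = (\<Sum>u\<in>E. cinner u v *s u)"
    using spectral[OF h] by blast
  define lam where "lam u = Re (cinner u (A *v u))" for u
  have lam0: "lam u \<ge> 0" for u using pA unfolding psd_cinner lam_def by blast
  have E3': "A *v u = complex_of_real (lam u) *s u" if "u \<in> E" for u
    using E3 that psd_quad_real[OF pA, of u] unfolding lam_def by simp
  define s where "s u = complex_of_real (sqrt (lam u))" for u
  define X where "X = (\<chi> i j. \<Sum>u\<in>E. s u * u$i * cnj (u$j))"
  have Xv: "X *v v = (\<Sum>u\<in>E. (s u * cinner u v) *s u)" for v
  proof -
    have "(X *v v)$i = (\<Sum>u\<in>E. s u * cinner u v * u$i)" for i
    proof -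
      have "(X *v v)$i = (\<Sum>j\<in>UNIV. \<Sum>u\<in>E. s u * u$i * cnj (u$j) * v$j)"
        unfolding X_def matrix_vector_mult_def by (simp add: sum_distrib_right)
      also have "\<dots> = (\<Sum>u\<in>E. \<Sum>j\<in>UNIV. s u * u$i * (cnj (u$j) * v$j))"
        by (subst sum.swap) (simp add: mult.assoc)
      also have "\<dots> = (\<Sum>u\<in>E. s u * cinner u v * u$i)"
        unfolding cinner_def by (simp add: sum_distrib_left[symmetric] mult_ac)
      finally show ?thesis .
    qed
    then show ?thesis by (simp add: vec_eq_iff sum_component)
  qed
  have XX: "(X ** X) *v v = A *v v" for v
  proof -
    have "(X ** X) *v v = X *v (X *v v)" by (simp add: matrix_vector_mul_assoc)
    also have "\<dots> = (\<Sum>w\<in>E. (s w * cinner w (X *v v)) *s w)" by (rule Xv)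
    also have "\<dots> = (\<Sum>w\<in>E. (complex_of_real (lam w) * cinner w v) *s w)"
    proof (rule sum.cong[OF refl])
      fix w assume wE: "w \<in> E"
      have "cinner w (X *v v) = s w * cinner w v"
        unfolding Xv by (rule orth_sum[OF fE E1 E2 wE])
      moreover have "s w * s w = complex_of_real (lam w)"
        unfolding s_def using lam0[of w] by (simp flip: of_real_mult)
      ultimately show "(s w * cinner w (X *v v)) *s w = (complex_of_real (lam w) * cinner w v) *s w"
        by (simp add: mult.assoc[symmetric])
    qed
    also have "\<dots> = A *v v"
    proof -
      have "A *v v = A *v (\<Sum>u\<in>E. cinner u v *s u)" using E4 by metis
      also have "\<dots> = (\<Sum>u\<in>E. cinner u v *s (A *v u))" by (simp only: mv_sum mv_scale)
      also have "\<dots> = (\<Sum>u\<in>E. (complex_of_real (lam u) * cinner u v) *s u)"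
        by (rule sum.cong[OF refl]) (simp add: E3' vector_smult_assoc mult.commute)
      finally show ?thesis by simp
    qed
    finally show ?thesis .
  qed
  have pX: "psd X"
    unfolding psd_cinner
  proof
    fix v
    have "cinner v (X *v v) = (\<Sum>u\<in>E. s u * cinner u v * cinner v u)"
      unfolding Xv by (simp only: cinner_sum_right cinner_scale_right)
    also have "\<dots> = complex_of_real (\<Sum>u\<in>E. sqrt (lam u) * (cmod (cinner u v))^2)"
      unfolding of_real_sum
    proof (rule sum.cong[OF refl])
      fix u
      have "cinner u v * cinner v u = complex_of_real ((cmod (cinner u v))^2)"
        using cinner_commute[of v u] complex_norm_square[of "cinner u v"] by simp
      then show "s u * cinner u v * cinner v u = complex_of_real (sqrt (lam u) * (cmod (cinner u v))^2)"
        unfolding s_def by (simp add: mult.assoc)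
    qed
    finally have eq: "cinner v (X *v v) = complex_of_real (\<Sum>u\<in>E. sqrt (lam u) * (cmod (cinner u v))^2)" .
    have nn: "0 \<le> (\<Sum>u\<in>E. sqrt (lam u) * (cmod (cinner u v))^2)"
      by (intro sum_nonneg mult_nonneg_nonneg) (simp_all add: lam0)
    show "Im (cinner v (X *v v)) = 0 \<and> Re (cinner v (X *v v)) \<ge> 0"
      unfolding eq Re_complex_of_real Im_complex_of_real using nn by blast
  qed
  show ?thesis using pX XX matrix_eq by blast
qed




lemma adj_diff: "adj (A - B) = adj A - adj B"
  unfolding adj_def by (simp add: vec_eq_iff)

lemma psd_zero_quad:
  assumes pM: "psd M" and z: "cinner w (M *v w) = 0"
  shows "M *v w = 0"
proof -
  obtain S where pS: "psd S" and SS: "S ** S = M" using sqrt_exists[OF pM] by blast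
  have hS: "adj S = S" by (rule psd_herm[OF pS])
  have "cinner w (M *v w) = cinner w (S *v (S *v w))" by (simp add: SS[symmetric] matrix_vector_mul_assoc)
  also have "\<dots> = cinner (S *v w) (S *v w)" by (rule herm_cinner[OF hS])
  finally have "cinner (S *v w) (S *v w) = 0" using z by simp
  then have "S *v w = 0" by (simp only: cinner_self_eq_0)
  then have "S *v (S *v w) = 0" by simp
  then show ?thesis by (simp add: SS[symmetric] matrix_vector_mul_assoc)
qed

lemma sqrt_unique:
  fixes X Y :: "'n::finite op"
  assumes pX: "psd X" and pY: "psd Y" and eq: "X ** X = Y ** Y"
  shows "X = Y"
proof -
  define D where "D = X - Y"
  have hX: "adj X = X" by (rule psd_herm[OF pX])
  have hY: "adj Y = Y" by (rule psd_herm[OF pY])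
  have hD: "adj D = D" unfolding D_def adj_diff hX hY ..
  obtain E where fE: "finite E" and E1: "\<forall>u\<in>E. cinner u u = 1"
    and E3: "\<forall>u\<in>E. D *v u = cinner u (D *v u) *s u"
    and E4: "\<forall>v. v = (\<Sum>u\<in>E. cinner u v *s u)"
    using spectral[OF hD] by blast
  have Du: "D *v u = 0" if uE: "u \<in> E" for u
  proof -
    define \<mu> where "\<mu> = Re (cinner u (D *v u))"
    have Du: "D *v u = complex_of_real \<mu> *s u"
      using E3 uE herm_quad_real[OF hD, of u] unfolding \<mu>_def by simp
    define a where "a = X *v u"
    define b where "b = Y *v u"
    have ab: "a - b = complex_of_real \<mu> *s u"
      unfolding a_def b_def using Du unfolding D_def by (simp add: matrix_vector_mult_diff_rdistrib)
    define p where "p = Re (cinner u a)"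
    define q where "q = Re (cinner u b)"
    have p: "cinner u a = complex_of_real p" "p \<ge> 0"
      unfolding p_def a_def using psd_quad_real[OF pX, of u] pX psd_cinner by auto
    have q: "cinner u b = complex_of_real q" "q \<ge> 0"
      unfolding q_def b_def using psd_quad_real[OF pY, of u] pY psd_cinner by auto
    have aa: "cinner a a = cinner b b"
    proof -
      have "cinner a a = cinner u (X *v a)" unfolding a_def by (rule herm_cinner[OF hX, symmetric])
      also have "\<dots> = cinner u ((X ** X) *v u)" unfolding a_def by (simp add: matrix_vector_mul_assoc)
      also have "\<dots> = cinner u (Y *v b)" unfolding eq b_def by (simp add: matrix_vector_mul_assoc)
      also have "\<dots> = cinner b b" unfolding b_def by (rule herm_cinner[OF hY])
      finally show ?thesis .
    qed
    have "cinner a a - cinner b b = cinner (a - b) a + cinner b (a - b)"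
      by (simp add: cinner_diff_left cinner_diff_right)
    also have "\<dots> = complex_of_real \<mu> * complex_of_real p + complex_of_real \<mu> * complex_of_real q"
      unfolding ab cinner_scale_left cinner_scale_right
      using p(1) q(1) cinner_commute[of b u] by simp
    finally have "complex_of_real (\<mu> * (p + q)) = 0" using aa by (simp add: algebra_simps)
    then have "\<mu> * (p + q) = 0" by (simp only: of_real_eq_0_iff)
    then have "\<mu> = 0 \<or> (p = 0 \<and> q = 0)" using p(2) q(2) by auto
    then show ?thesis
    proof
      assume "\<mu> = 0" then show ?thesis using Du by simp
    next
      assume "p = 0 \<and> q = 0"
      then have "X *v u = 0" "Y *v u = 0"
        using psd_zero_quad[OF pX, of u] psd_zero_quad[OF pY, of u] p(1) q(1)
        unfolding a_def b_def by auto
      then show ?thesis unfolding D_def by (simp add: matrix_vector_mult_diff_rdistrib)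
    qed
  qed
  have "D *v v = 0" for v
  proof -
    have "D *v v = D *v (\<Sum>u\<in>E. cinner u v *s u)" using E4 by metis
    also have "\<dots> = (\<Sum>u\<in>E. cinner u v *s (D *v u))" by (simp only: mv_sum mv_scale)
    also have "\<dots> = 0" using Du by simp
    finally show ?thesis .
  qed
  then have "D = 0" by (simp add: matrix_eq)
  then show ?thesis unfolding D_def by simp
qed

lemma op_sqrt:
  assumes "psd A"
  shows "psd (op_sqrt A)" "op_sqrt A ** op_sqrt A = A"
proof -
  have "\<exists>!X. psd X \<and> X ** X = A"
    using sqrt_exists[OF assms] sqrt_unique by metis
  then have "psd (op_sqrt A) \<and> op_sqrt A ** op_sqrt A = A"
    unfolding op_sqrt_def by (rule theI')
  then show "psd (op_sqrt A)" "op_sqrt A ** op_sqrt A = A" by auto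
qed




lemma mm_sum_right: "(A::'n::finite op) ** (\<Sum>l\<in>L. f l) = (\<Sum>l\<in>L. A ** f l)"
  unfolding matrix_matrix_mult_def
  by (simp add: vec_eq_iff sum_component sum_distrib_left sum.swap[of _ L])
lemma mm_sum_left: "(\<Sum>l\<in>L. f l) ** (A::'n::finite op) = (\<Sum>l\<in>L. f l ** A)"
  unfolding matrix_matrix_mult_def
  by (simp add: vec_eq_iff sum_component sum_distrib_right sum.swap[of _ L])
lemma mm_add_left: "((A::'n::finite op) + B) ** C = A ** C + B ** C"
  unfolding matrix_matrix_mult_def by (simp add: vec_eq_iff distrib_right sum.distrib)
lemma mm_scaleR_left: "(r *\<^sub>R (A::'n::finite op)) ** C = r *\<^sub>R (A ** C)"
  by (simp add: scalar_matrix_assoc)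
lemma mm_scaleR_right: "(A::'n::finite op) ** (r *\<^sub>R C) = r *\<^sub>R (A ** C)"
  by (simp add: matrix_scalar_ac scalar_matrix_assoc)
lemma scaleR_cplx: "r *\<^sub>R (z::complex) = complex_of_real r * z"
  by (simp add: scaleR_conv_of_real)
lemma scaleR_mv: "(r *\<^sub>R (M::'n::finite op)) *v v = complex_of_real r *s (M *v v)"
  unfolding matrix_vector_mult_def
  by (simp add: vec_eq_iff scaleR_cplx sum_distrib_left mult_ac)
lemma trace_sum: "trace (\<Sum>l\<in>L. f l) = (\<Sum>l\<in>L. trace (f l :: 'n::finite op))"
  unfolding trace_def by (simp add: sum_component sum.swap[of _ L])
lemma trace_scaleR: "trace (r *\<^sub>R (M::'n::finite op)) = complex_of_real r * trace M"
  unfolding trace_def by (simp add: scaleR_cplx sum_distrib_left)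
lemma adj_scaleR: "adj (r *\<^sub>R A) = r *\<^sub>R adj A"
  unfolding adj_def by (simp add: vec_eq_iff scaleR_cplx)

lemma psd_sandwich:
  assumes "psd M" shows "psd (C ** M ** adj C)"
  unfolding psd_cinner
proof
  fix v
  have "cinner v ((C ** M ** adj C) *v v) = cinner (adj C *v v) (M *v (adj C *v v))"
    by (simp add: matrix_vector_mul_assoc[symmetric] cinner_adj)
  then show "Im (cinner v ((C ** M ** adj C) *v v)) = 0 \<and> Re (cinner v ((C ** M ** adj C) *v v)) \<ge> 0"
    using assms unfolding psd_cinner by simp
qed

lemma psd_scaleR:
  assumes "psd M" "r \<ge> 0" shows "psd (r *\<^sub>R M)"
  unfolding psd_cinner
proof
  fix v
  have "cinner v ((r *\<^sub>R M) *v v) = complex_of_real r * cinner v (M *v v)"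
    by (simp add: scaleR_mv cinner_scale_right)
  then show "Im (cinner v ((r *\<^sub>R M) *v v)) = 0 \<and> Re (cinner v ((r *\<^sub>R M) *v v)) \<ge> 0"
    using assms unfolding psd_cinner by simp
qed

lemma cinner_axis: "cinner (axis i 1) w = w $ i"
  unfolding cinner_def axis_def by (simp add: if_distrib if_distribR cong: if_cong)
lemma mv_axis: "(M *v axis i 1) $ k = M $ k $ i"
  unfolding matrix_vector_mult_def axis_def by (simp add: if_distrib if_distribR cong: if_cong)

lemma trace_quad: "trace M = (\<Sum>i\<in>UNIV. cinner (axis i 1) (M *v axis i 1))"
  unfolding trace_def cinner_axis mv_axis ..

lemma psd_trace:
  assumes "psd M"
  shows "trace M = complex_of_real (Re (trace M))" "Re (trace M) \<ge> 0"
proof -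
  have "Im (trace M) = 0" unfolding trace_quad Im_sum
    using assms unfolding psd_cinner by simp
  then show "trace M = complex_of_real (Re (trace M))" by (simp add: complex_eq_iff)
  show "Re (trace M) \<ge> 0" unfolding trace_quad Re_sum
    using assms unfolding psd_cinner by (simp add: sum_nonneg)
qed

lemma psd_trace_zero:
  assumes pM: "psd M" and t: "trace M = 0"
  shows "M = 0"
proof -
  have "Re (cinner (axis i 1) (M *v axis i 1)) = 0" for i
  proof -
    have "(\<Sum>i\<in>UNIV. Re (cinner (axis i 1) (M *v axis i 1))) = 0"
      using t unfolding trace_quad Re_sum[symmetric] by simp
    moreover have "\<forall>i\<in>UNIV. Re (cinner (axis i 1) (M *v axis i 1)) \<ge> 0"
      using pM unfolding psd_cinner by simp
    ultimately show ?thesis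
      using sum_nonneg_eq_0_iff[of UNIV "\<lambda>i. Re (cinner (axis i 1) (M *v axis i 1))"] by auto
  qed
  then have "cinner (axis i 1) (M *v axis i 1) = 0" for i
    using pM unfolding psd_cinner by (simp add: complex_eq_iff)
  then have "M *v axis i 1 = 0" for i using psd_zero_quad[OF pM] by blast
  then have "M $ k $ i = 0" for k i using mv_axis[of M i k] by simp
  then show ?thesis by (simp add: vec_eq_iff)
qed




lemma jm_to_lhs:
  fixes D :: "'a::finite \<Rightarrow> 'x::finite \<Rightarrow> 'n::finite op"
  assumes pS: "psd S" and Sr: "S ** S = \<rho>" and dr: "density_op \<rho>" and jm: "JM D"
  shows "LHS (\<lambda>a x. S ** D a x ** S)"
proof -
  obtain L :: "nat set" and G :: "nat \<Rightarrow> 'n op" and p :: "'a \<Rightarrow> 'x \<Rightarrow> nat \<Rightarrow> real" where fL: "finite L" and pv: "povm G L"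
    and p0: "\<forall>a x l. l \<in> L \<longrightarrow> p a x l \<ge> 0"
    and p1: "\<forall>x l. l \<in> L \<longrightarrow> (\<Sum>a\<in>UNIV. p a x l) = 1"
    and Dd: "\<forall>a x. D a x = (\<Sum>l\<in>L. p a x l *\<^sub>R G l)"
    using jm unfolding JM_def by blast
  have hS: "adj S = S" by (rule psd_herm[OF pS])
  define T where "T l = S ** G l ** S" for l
  have pT: "psd (T l)" if "l \<in> L" for l
    using psd_sandwich[of "G l" S] pv that hS unfolding povm_def T_def by simp
  define q where "q l = Re (trace (T l))" for l
  have trT: "trace (T l) = complex_of_real (q l)" "q l \<ge> 0" if "l \<in> L" for l
    using psd_trace[OF pT[OF that]] unfolding q_def by auto
  define r where "r l = (if q l = 0 then \<rho> else (1 / q l) *\<^sub>R T l)" for l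
  have sumT: "(\<Sum>l\<in>L. T l) = \<rho>"
  proof -
    have "(\<Sum>l\<in>L. T l) = S ** (\<Sum>l\<in>L. G l) ** S"
      unfolding T_def by (simp only: mm_sum_right mm_sum_left)
    also have "\<dots> = \<rho>" using pv Sr unfolding povm_def by simp
    finally show ?thesis .
  qed
  have sumq: "(\<Sum>l\<in>L. q l) = 1"
  proof -
    have "trace (\<Sum>l\<in>L. T l) = 1" using sumT dr unfolding density_op_def by simp
    moreover have "trace (\<Sum>l\<in>L. T l) = (\<Sum>l\<in>L. complex_of_real (q l))"
      unfolding trace_sum by (rule sum.cong[OF refl]) (simp add: trT(1))
    ultimately have "complex_of_real (\<Sum>l\<in>L. q l) = 1" by (simp only: of_real_sum)
    then show ?thesis by (simp only: of_real_eq_1_iff)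
  qed
  have dens: "density_op (r l)" if lL: "l \<in> L" for l
  proof (cases "q l = 0")
    case True then show ?thesis unfolding r_def using dr by simp
  next
    case False
    then have qp: "q l > 0" using trT(2)[OF lL] by simp
    have "psd (r l)" unfolding r_def using False psd_scaleR[OF pT[OF lL], of "1 / q l"] qp by simp
    moreover have "trace (r l) = 1" unfolding r_def using False
      by (simp add: trace_scaleR trT(1)[OF lL])
    ultimately show ?thesis unfolding density_op_def by simp
  qed
  have dec: "S ** D a x ** S = (\<Sum>l\<in>L. (q l * p a x l) *\<^sub>R r l)" for a x
  proof -
    have "S ** D a x ** S = (\<Sum>l\<in>L. p a x l *\<^sub>R T l)"
      unfolding Dd[rule_format] T_def by (simp only: mm_sum_right mm_sum_left mm_scaleR_left mm_scaleR_right)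
    also have "\<dots> = (\<Sum>l\<in>L. (q l * p a x l) *\<^sub>R r l)"
    proof (rule sum.cong[OF refl])
      fix l assume lL: "l \<in> L"
      show "p a x l *\<^sub>R T l = (q l * p a x l) *\<^sub>R r l"
      proof (cases "q l = 0")
        case True
        then have "T l = 0" using psd_trace_zero[OF pT[OF lL]] trT(1)[OF lL] by simp
        then show ?thesis using True by simp
      next
        case False then show ?thesis unfolding r_def by simp
      qed
    qed
    finally show ?thesis .
  qed
  show ?thesis unfolding LHS_def
  proof (rule exI[of _ L], rule exI[of _ q], rule exI[of _ p], rule exI[of _ r], intro conjI)
    show "finite L" by (fact fL)
    show "\<forall>l\<in>L. 0 \<le> q l" using trT(2) by blast
    show "(\<Sum>l\<in>L. q l) = 1" by (fact sumq)
    show "\<forall>a x l. l \<in> L \<longrightarrow> 0 \<le> p a x l" by (fact p0)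
    show "\<forall>x l. l \<in> L \<longrightarrow> (\<Sum>a\<in>UNIV. p a x l) = 1" by (fact p1)
    show "\<forall>l\<in>L. density_op (r l)" using dens by blast
    show "\<forall>a x. S ** D a x ** S = (\<Sum>l\<in>L. (q l * p a x l) *\<^sub>R r l)" using dec by blast
  qed
qed

lemma lhs_to_jm:
  fixes N :: "'a::finite \<Rightarrow> 'x::finite \<Rightarrow> 'n::finite op"
  assumes pS: "psd S" and Sr: "S ** S = \<rho>" and inv: "invertible \<rho>"
    and Nsum: "\<And>x. (\<Sum>a\<in>UNIV. N a x) = mat 1"
    and lhs: "LHS (\<lambda>a x. S ** N a x ** S)"
  shows "JM N"
proof -
  obtain L :: "nat set" and q :: "nat \<Rightarrow> real" and p :: "'a \<Rightarrow> 'x \<Rightarrow> nat \<Rightarrow> real"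
    and r :: "nat \<Rightarrow> 'n op" where fL: "finite L" and q0: "\<forall>l\<in>L. q l \<ge> 0" and q1: "(\<Sum>l\<in>L. q l) = 1"
    and p0: "\<forall>a x l. l \<in> L \<longrightarrow> p a x l \<ge> 0"
    and p1: "\<forall>x l. l \<in> L \<longrightarrow> (\<Sum>a\<in>UNIV. p a x l) = 1"
    and dr: "\<forall>l\<in>L. density_op (r l)"
    and dec: "\<forall>a x. S ** N a x ** S = (\<Sum>l\<in>L. (q l * p a x l) *\<^sub>R r l)"
    using lhs unfolding LHS_def by blast
  have hS: "adj S = S" by (rule psd_herm[OF pS])
  obtain R where R1: "\<rho> ** R = mat 1" using inv unfolding invertible_def by blast
  define T where "T = S ** R"
  have ST: "S ** T = mat 1" unfolding T_def using R1 Sr by (simp add: matrix_mul_assoc)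
  have TS: "T ** S = mat 1" using ST matrix_left_right_inverse by blast
  have hT: "adj T = T"
  proof -
    have "adj T ** S = mat 1" using arg_cong[OF ST, of adj] hS by (simp add: adj_mult)
    then have "adj T = adj T ** (S ** T)" using ST by simp
    also have "\<dots> = T" using \<open>adj T ** S = mat 1\<close> by (simp add: matrix_mul_assoc)
    finally show ?thesis .
  qed
  define G where "G l = q l *\<^sub>R (T ** r l ** T)" for l
  have pG: "psd (G l)" if "l \<in> L" for l
    unfolding G_def using psd_scaleR[OF psd_sandwich[of "r l" T]] dr q0 that hT
    unfolding density_op_def by simp
  have backeq: "M = T ** (S ** M ** S) ** T" for M
  proof -
    have "T ** (S ** M ** S) ** T = (T ** S) ** M ** (S ** T)" by (simp add: matrix_mul_assoc)
    then show ?thesis using TS ST by simp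
  qed
  have decN: "N a x = (\<Sum>l\<in>L. p a x l *\<^sub>R G l)" for a x
  proof -
    have "N a x = T ** (\<Sum>l\<in>L. (q l * p a x l) *\<^sub>R r l) ** T" using backeq[of "N a x"] dec by simp
    also have "\<dots> = (\<Sum>l\<in>L. p a x l *\<^sub>R G l)"
      unfolding G_def by (simp only: mm_sum_right mm_sum_left mm_scaleR_left mm_scaleR_right scaleR_scaleR mult.commute)
    finally show ?thesis .
  qed
  obtain x0 :: 'x where True by blast
  have sumG: "(\<Sum>l\<in>L. G l) = mat 1"
  proof -
    have "(\<Sum>a\<in>UNIV. S ** N a x0 ** S) = S ** (\<Sum>a\<in>UNIV. N a x0) ** S"
      by (simp only: mm_sum_right mm_sum_left)
    also have "\<dots> = \<rho>" using Nsum Sr by simp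
    finally have e1: "(\<Sum>a\<in>UNIV. S ** N a x0 ** S) = \<rho>" .
    have "(\<Sum>a\<in>UNIV. S ** N a x0 ** S) = (\<Sum>a\<in>UNIV. \<Sum>l\<in>L. (q l * p a x0 l) *\<^sub>R r l)"
      using dec by simp
    also have "\<dots> = (\<Sum>l\<in>L. \<Sum>a\<in>UNIV. (q l * p a x0 l) *\<^sub>R r l)" by (rule sum.swap)
    also have "\<dots> = (\<Sum>l\<in>L. q l *\<^sub>R r l)"
    proof (rule sum.cong[OF refl])
      fix l assume "l \<in> L"
      then have "(\<Sum>a\<in>UNIV. q l * p a x0 l) = q l" using p1 by (simp add: sum_distrib_left[symmetric])
      then show "(\<Sum>a\<in>UNIV. (q l * p a x0 l) *\<^sub>R r l) = q l *\<^sub>R r l"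
        by (simp add: scaleR_sum_left[symmetric])
    qed
    finally have e2: "(\<Sum>l\<in>L. q l *\<^sub>R r l) = \<rho>" using e1 by simp
    have "(\<Sum>l\<in>L. G l) = T ** (\<Sum>l\<in>L. q l *\<^sub>R r l) ** T"
      unfolding G_def by (simp only: mm_sum_right mm_sum_left mm_scaleR_left mm_scaleR_right)
    also have "\<dots> = T ** S ** (S ** T)" unfolding e2 Sr[symmetric] by (simp add: matrix_mul_assoc)
    also have "\<dots> = mat 1" using TS ST by simp
    finally show ?thesis .
  qed
  show ?thesis unfolding JM_def
  proof (rule exI[of _ L], rule exI[of _ G], rule exI[of _ p], intro conjI)
    show "finite L" by (fact fL)
    show "povm G L" unfolding povm_def using pG sumG by blast
    show "\<forall>a x l. l \<in> L \<longrightarrow> 0 \<le> p a x l" by (fact p0)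
    show "\<forall>x l. l \<in> L \<longrightarrow> (\<Sum>a\<in>UNIV. p a x l) = 1" by (fact p1)
    show "\<forall>a x. N a x = (\<Sum>l\<in>L. p a x l *\<^sub>R G l)" using decN by blast
  qed
qed




lemma psd_B: "MA B \<Longrightarrow> psd (B a x)"
  unfolding MA_def povm_def by blast
lemma sum_B: "MA B \<Longrightarrow> (\<Sum>a\<in>UNIV. B a x) = mat 1"
  unfolding MA_def povm_def by blast

lemma JM_witness:
  fixes B :: "'a::finite \<Rightarrow> 'x::finite \<Rightarrow> 'n::finite op"
  assumes MA: "MA B"
  shows "JM (\<lambda>a x. (1 / (1 + (real CARD('x) - 1))) *\<^sub>R (B a x + ((real CARD('x) - 1) / real CARD('a)) *\<^sub>R mat 1))"
proof -
  define m where "m = real CARD('x)"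
  define k where "k = real CARD('a)"
  have m0: "m \<ge> 1" unfolding m_def by (simp add: Suc_leI)
  have k0: "k > 0" unfolding k_def by simp
  obtain h :: "nat \<Rightarrow> 'x \<times> 'a" where bij: "bij_betw h {0..<card (UNIV::('x \<times> 'a) set)} UNIV"
    using ex_bij_betw_nat_finite[of "UNIV::('x \<times> 'a) set"] by auto
  define L where "L = {0..<card (UNIV::('x \<times> 'a) set)}"
  have sumL: "(\<Sum>l\<in>L. f (h l)) = (\<Sum>y\<in>UNIV. \<Sum>b\<in>UNIV. f (y, b))" for f :: "'x \<times> 'a \<Rightarrow> 'n op"
  proof -
    have "(\<Sum>l\<in>L. f (h l)) = (\<Sum>z\<in>UNIV. f z)" unfolding L_def by (rule sum.reindex_bij_betw[OF bij])
    also have "\<dots> = (\<Sum>y\<in>UNIV. \<Sum>b\<in>UNIV. f (y, b))"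
      by (simp add: sum.cartesian_product)
    finally show ?thesis .
  qed
  define G where "G l = (1/m) *\<^sub>R B (snd (h l)) (fst (h l))" for l
  define pp :: "'a \<Rightarrow> 'x \<Rightarrow> 'x \<times> 'a \<Rightarrow> real"
    where "pp a x z = (if fst z = x then (if snd z = a then 1 else 0) else 1/k)" for a x z
  define p where "p a x l = pp a x (h l)" for a x l
  have pvG: "povm G L"
    unfolding povm_def
  proof
    show "\<forall>l\<in>L. psd (G l)" unfolding G_def using psd_scaleR[OF psd_B[OF MA]] m0 by simp
    have "(\<Sum>l\<in>L. G l) = (\<Sum>y\<in>UNIV. \<Sum>b\<in>UNIV. (1/m) *\<^sub>R B b y)"
      unfolding G_def using sumL[of "\<lambda>z. (1/m) *\<^sub>R B (snd z) (fst z)"] by simp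
    also have "\<dots> = (\<Sum>y\<in>(UNIV::'x set). (1/m) *\<^sub>R mat 1)"
      by (simp add: scaleR_sum_right[symmetric] sum_B[OF MA])
    also have "\<dots> = (\<Sum>y\<in>(UNIV::'x set). 1/m) *\<^sub>R mat 1" by (rule scaleR_sum_left[symmetric])
    also have "\<dots> = (m * (1/m)) *\<^sub>R (mat 1::'n op)" by (simp add: m_def)
    also have "\<dots> = mat 1" using m0 by simp
    finally show "(\<Sum>l\<in>L. G l) = mat 1" .
  qed
  have p0: "\<forall>a x l. l \<in> L \<longrightarrow> p a x l \<ge> 0" unfolding p_def pp_def using k0 by simp
  have p1: "\<forall>x l. l \<in> L \<longrightarrow> (\<Sum>a\<in>UNIV. p a x l) = 1"
  proof (intro allI impI)
    fix x l
    show "(\<Sum>a\<in>UNIV. p a x l) = 1"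
    proof (cases "fst (h l) = x")
      case True
      then show ?thesis unfolding p_def pp_def by simp
    next
      case False
      then have "(\<Sum>a\<in>UNIV. p a x l) = k * (1/k)" unfolding p_def pp_def k_def by simp
      then show ?thesis using k0 by simp
    qed
  qed
  have dec: "(1 / (1 + (real CARD('x) - 1))) *\<^sub>R (B a x + ((real CARD('x) - 1) / real CARD('a)) *\<^sub>R mat 1)
      = (\<Sum>l\<in>L. p a x l *\<^sub>R G l)" for a x
  proof -
    define F where "F y = (\<Sum>b\<in>UNIV. pp a x (y, b) *\<^sub>R ((1/m) *\<^sub>R B b y))" for y
    have "(\<Sum>l\<in>L. p a x l *\<^sub>R G l) = (\<Sum>y\<in>UNIV. F y)"
      unfolding p_def G_def F_def using sumL[of "\<lambda>z. pp a x z *\<^sub>R ((1/m) *\<^sub>R B (snd z) (fst z))"] by simp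
    also have "\<dots> = F x + (\<Sum>y\<in>UNIV - {x}. F y)" by (simp add: sum.remove)
    also have "F x = (1/m) *\<^sub>R B a x"
      unfolding F_def pp_def by (simp add: if_distrib if_distribR cong: if_cong)
    also have "(\<Sum>y\<in>UNIV - {x}. F y) = (\<Sum>y\<in>UNIV - {x}. (1/(k*m)) *\<^sub>R mat 1)"
    proof (rule sum.cong[OF refl])
      fix y assume "y \<in> UNIV - {x}"
      then have "F y = (\<Sum>b\<in>UNIV. (1/k) *\<^sub>R ((1/m) *\<^sub>R B b y))" unfolding F_def pp_def by simp
      also have "\<dots> = (1/(k*m)) *\<^sub>R (\<Sum>b\<in>UNIV. B b y)" by (simp add: scaleR_sum_right[symmetric])
      finally show "F y = (1/(k*m)) *\<^sub>R mat 1" using sum_B[OF MA] by simp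
    qed
    also have "\<dots> = ((m - 1) * (1/(k*m))) *\<^sub>R mat 1"
    proof -
      have "real (card (UNIV - {x})) = m - 1" unfolding m_def
        by (simp add: card_Diff_singleton of_nat_diff Suc_leI)
      have "(\<Sum>y\<in>UNIV - {x}. (1/(k*m)) *\<^sub>R (mat 1::'n op)) = (\<Sum>y\<in>UNIV - {x}. 1/(k*m)) *\<^sub>R mat 1"
        by (rule scaleR_sum_left[symmetric])
      also have "(\<Sum>y\<in>UNIV - {x}. 1/(k*m)) = (m - 1) * (1/(k*m))"
        using \<open>real (card (UNIV - {x})) = m - 1\<close> by simp
      finally show ?thesis .
    qed
    finally have e: "(\<Sum>l\<in>L. p a x l *\<^sub>R G l) = (1/m) *\<^sub>R B a x + ((m - 1) * (1/(k*m))) *\<^sub>R mat 1" .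
    have "(1 / (1 + (real CARD('x) - 1))) *\<^sub>R (B a x + ((real CARD('x) - 1) / real CARD('a)) *\<^sub>R mat 1)
        = (1/m) *\<^sub>R B a x + ((m - 1) * (1/(k*m))) *\<^sub>R mat 1"
      unfolding m_def[symmetric] k_def[symmetric] by (simp add: scaleR_add_right)
    then show ?thesis using e by simp
  qed
  show ?thesis unfolding JM_def
  proof (rule exI[of _ L], rule exI[of _ G], rule exI[of _ p], intro conjI)
    show "finite L" unfolding L_def by simp
    show "povm G L" by (fact pvG)
    show "\<forall>a x l. l \<in> L \<longrightarrow> 0 \<le> p a x l" by (fact p0)
    show "\<forall>x l. l \<in> L \<longrightarrow> (\<Sum>a\<in>UNIV. p a x l) = 1" by (fact p1)
    show "\<forall>a x. (1 / (1 + (real CARD('x) - 1))) *\<^sub>R (B a x + ((real CARD('x) - 1) / real CARD('a)) *\<^sub>R mat 1)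
      = (\<Sum>l\<in>L. p a x l *\<^sub>R G l)" using dec by blast
  qed
qed




lemma psd_mat1: "psd (mat 1 :: 'n::finite op)"
  unfolding psd_cinner by (simp add: cinner_self)

lemma main_sets:
  fixes B :: "'a::finite \<Rightarrow> 'x::finite \<Rightarrow> 'n::finite op"
  assumes MA: "MA B" and dr: "density_op \<rho>"
  defines "IRs \<equiv> {t. t \<ge> 0 \<and> (\<exists>D. JM D \<and>
      (\<forall>a x. (1 / (1 + t)) *\<^sub>R (B a x + (t / real CARD('a)) *\<^sub>R mat 1) = D a x))}"
  defines "SRs \<equiv> {t. t \<ge> 0 \<and> (\<exists>\<tau>. LHS \<tau> \<and>
      (\<forall>a x. (1 / (1 + t)) *\<^sub>R (sandwich \<rho> B a x + (t / real CARD('a)) *\<^sub>R reduced_state (sandwich \<rho> B)) = \<tau> a x))}"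
  shows "IR_R B = Inf IRs" "SR_R (sandwich \<rho> B) = Inf SRs" "IRs \<subseteq> SRs"
    "invertible \<rho> \<Longrightarrow> SRs \<subseteq> IRs" "IRs \<noteq> {}" "bdd_below SRs"
proof -
  show "IR_R B = Inf IRs" unfolding IR_R_def IRs_def ..
  show "SR_R (sandwich \<rho> B) = Inf SRs" unfolding SR_R_def SRs_def ..
  define S where "S = op_sqrt \<rho>"
  have pr: "psd \<rho>" using dr unfolding density_op_def by simp
  have pS: "psd S" and SS: "S ** S = \<rho>" unfolding S_def using op_sqrt[OF pr] by auto
  define k where "k = real CARD('a)"
  define N where "N t a x = (1 / (1 + t)) *\<^sub>R (B a x + (t / k) *\<^sub>R mat 1)" for t a x
  have sw: "sandwich \<rho> B = (\<lambda>a x. S ** B a x ** S)" unfolding sandwich_def S_def ..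
  have rs: "reduced_state (sandwich \<rho> B) = \<rho>"
    unfolding reduced_state_def
  proof (rule the_equality)
    show "\<forall>x. (\<Sum>a\<in>UNIV. sandwich \<rho> B a x) = \<rho>"
    proof
      fix x
      have "(\<Sum>a\<in>UNIV. S ** B a x ** S) = S ** (\<Sum>a\<in>UNIV. B a x) ** S"
        by (simp only: mm_sum_left mm_sum_right)
      then show "(\<Sum>a\<in>UNIV. sandwich \<rho> B a x) = \<rho>" using sum_B[OF MA] SS sw by simp
    qed
    fix r assume "\<forall>x. (\<Sum>a\<in>UNIV. sandwich \<rho> B a x) = r"
    moreover obtain x0 :: 'x where True by blast
    ultimately have "r = (\<Sum>a\<in>UNIV. sandwich \<rho> B a x0)" by simp
    also have "\<dots> = \<rho>" using \<open>\<forall>x. (\<Sum>a\<in>UNIV. sandwich \<rho> B a x) = \<rho>\<close> by simp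
    finally show "r = \<rho>" .
  qed
  have keyeq: "(1 / (1 + t)) *\<^sub>R (sandwich \<rho> B a x + (t / real CARD('a)) *\<^sub>R reduced_state (sandwich \<rho> B))
      = S ** N t a x ** S" for t a x
    unfolding rs unfolding sw N_def k_def
    by (simp add: mm_scaleR_left mm_scaleR_right matrix_add_ldistrib mm_add_left SS)
  have SRs': "SRs = {t. t \<ge> 0 \<and> LHS (\<lambda>a x. S ** N t a x ** S)}"
  proof -
    have "(\<exists>\<tau>. LHS \<tau> \<and> (\<forall>a x. S ** N t a x ** S = \<tau> a x)) \<longleftrightarrow> LHS (\<lambda>a x. S ** N t a x ** S)" for t
    proof
      assume "\<exists>\<tau>. LHS \<tau> \<and> (\<forall>a x. S ** N t a x ** S = \<tau> a x)"
      then obtain \<tau> where l: "LHS \<tau>" and e: "\<forall>a x. S ** N t a x ** S = \<tau> a x" by blast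
      from e have "(\<lambda>a x. S ** N t a x ** S) = \<tau>" by (simp add: fun_eq_iff)
      with l show "LHS (\<lambda>a x. S ** N t a x ** S)" by (simp only:)
    next
      assume "LHS (\<lambda>a x. S ** N t a x ** S)"
      then show "\<exists>\<tau>. LHS \<tau> \<and> (\<forall>a x. S ** N t a x ** S = \<tau> a x)"
        by (intro exI[of _ "\<lambda>a x. S ** N t a x ** S"]) simp
    qed
    then show ?thesis unfolding SRs_def keyeq by simp
  qed
  have IRs': "IRs = {t. t \<ge> 0 \<and> JM (N t)}"
  proof -
    have "(\<exists>D. JM D \<and> (\<forall>a x. N t a x = D a x)) \<longleftrightarrow> JM (N t)" for t
    proof
      assume "\<exists>D. JM D \<and> (\<forall>a x. N t a x = D a x)"
      then obtain D where l: "JM D" and e: "\<forall>a x. N t a x = D a x" by blast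
      from e have "N t = D" by (simp add: fun_eq_iff)
      with l show "JM (N t)" by (simp only:)
    next
      assume "JM (N t)"
      then show "\<exists>D. JM D \<and> (\<forall>a x. N t a x = D a x)"
        by (intro exI[of _ "N t"]) simp
    qed
    then show ?thesis unfolding IRs_def N_def k_def by simp
  qed
  show "IRs \<subseteq> SRs" unfolding IRs' SRs'
  proof (intro subsetI CollectI conjI)
    fix t assume "t \<in> {t. t \<ge> 0 \<and> JM (N t)}"
    then have "t \<ge> 0" "JM (N t)" by auto
    then show "t \<ge> 0" "LHS (\<lambda>a x. S ** N t a x ** S)" using jm_to_lhs[OF pS SS dr, of "N t"] by auto
  qed
  show "SRs \<subseteq> IRs" if inv: "invertible \<rho>"
  proof -
    have Nsum: "(\<Sum>a\<in>UNIV. N t a x) = mat 1" if t0: "t \<ge> 0" for t x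
    proof -
      have "(\<Sum>a\<in>UNIV. N t a x) = (1 / (1 + t)) *\<^sub>R (\<Sum>a\<in>UNIV. B a x + (t / k) *\<^sub>R mat 1)"
        unfolding N_def by (simp only: scaleR_sum_right)
      also have "(\<Sum>a\<in>UNIV. B a x + (t / k) *\<^sub>R mat 1) = (\<Sum>a\<in>UNIV. B a x) + (\<Sum>a\<in>(UNIV::'a set). t / k) *\<^sub>R mat 1"
        by (simp only: sum.distrib scaleR_sum_left)
      also have "(\<Sum>a\<in>(UNIV::'a set). t / k) = t" unfolding k_def by simp
      also have "(1 / (1 + t)) *\<^sub>R ((\<Sum>a\<in>UNIV. B a x) + t *\<^sub>R mat 1) = ((1 / (1 + t)) * (1 + t)) *\<^sub>R (mat 1 :: 'n op)"
      proof -
        have "(\<Sum>a\<in>UNIV. B a x) + t *\<^sub>R mat 1 = (1 + t) *\<^sub>R (mat 1 :: 'n op)"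
          using sum_B[OF MA] by (simp add: scaleR_add_left)
        then show ?thesis by (simp only: scaleR_scaleR)
      qed
      also have "\<dots> = mat 1" using t0 by simp
      finally show ?thesis .
    qed
    show ?thesis unfolding IRs' SRs'
    proof (intro subsetI CollectI conjI)
      fix t assume "t \<in> {t. t \<ge> 0 \<and> LHS (\<lambda>a x. S ** N t a x ** S)}"
      then have t0: "t \<ge> 0" and l: "LHS (\<lambda>a x. S ** N t a x ** S)" by auto
      show "t \<ge> 0" by (fact t0)
      show "JM (N t)" by (rule lhs_to_jm[OF pS SS inv Nsum[OF t0] l])
    qed
  qed
  show "IRs \<noteq> {}"
  proof -
    have "real CARD('x) - 1 \<in> IRs" unfolding IRs_def
      using JM_witness[OF MA] by (auto simp: Suc_leI)
    then show ?thesis by blast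
  qed
  show "bdd_below SRs" unfolding SRs_def by (rule bdd_belowI[of _ 0]) simp
qed

theorem lemma2:
  fixes B :: "'a::finite \<Rightarrow> 'x::finite \<Rightarrow> 'n::finite op"
  assumes "MA B"
  shows "(\<forall>\<rho>. density_op \<rho> \<longrightarrow> SR_R (sandwich \<rho> B) \<le> IR_R B)
       \<and> (\<exists>\<rho>. density_op \<rho> \<and> SR_R (sandwich \<rho> B) = IR_R B)
       \<and> (\<forall>\<rho>. density_op \<rho> \<and> invertible \<rho> \<longrightarrow> SR_R (sandwich \<rho> B) = IR_R B)"
proof -
  have c1: "SR_R (sandwich \<rho> B) \<le> IR_R B" if "density_op \<rho>" for \<rho>
  proof -
    note ms = main_sets[OF assms that]
    show ?thesis unfolding ms(1) ms(2) by (rule cInf_superset_mono[OF ms(5) ms(6) ms(3)])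
  qed
  have c3: "SR_R (sandwich \<rho> B) = IR_R B" if "density_op \<rho>" "invertible \<rho>" for \<rho>
  proof -
    note ms = main_sets[OF assms that(1)]
    from ms(3) ms(4)[OF that(2)] ms(1) ms(2) show ?thesis by simp
  qed
  define \<rho>0 where "\<rho>0 = (1 / real CARD('n)) *\<^sub>R (mat 1 :: 'n op)"
  have d0: "density_op \<rho>0"
    unfolding density_op_def \<rho>0_def
    using psd_scaleR[OF psd_mat1, of "1 / real CARD('n)"]
    by (simp add: trace_scaleR trace_I)
  have i0: "invertible \<rho>0"
    unfolding \<rho>0_def by (rule scalar_invertible) (auto simp: invertible_def)
  show ?thesis
  proof (intro conjI allI impI)
    show "\<exists>\<rho>. density_op \<rho> \<and> SR_R (sandwich \<rho> B) = IR_R B"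
      using c3[OF d0 i0] d0 by blast
  qed (use c1 c3 in auto)
qed


end
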